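(* The master series specialize as follows (as power series in $x$, convergent in a neighbourhood of $0$): (i) for $a\neq0$: $M(1;a;0;x)=(1+ax)^{1/a}$ and $M(0;a;0;x)=\frac{\ln(1+ax)}{a}$ (principal branches); (ii) $M(1;0;0;x)=e^{x}$ and $M(0;0;0;x)=x$; (iii) for $b\neq0$: $y=M(1;0;b;x)$ satisfies $y=e^{x y^{b}}$, and $y=M(0;0;b;x)$ satisfies $y=x e^{by}$; moreover $M(0;0;b;x)=\frac{W_0(-bx)}{-b}$, in particular $M(0;0;-1;x)=W_0(x)$; (iv) for $a\neq0$: $y=M(0;a;b;x)$ satisfies $y=\frac{\ln(1+a x e^{b y})}{a}$.
   Context: For $m,a,b\in\mathbb{C}$ the master series is the power series $M(m;a;b;x)=m+x+\sum_{\ell\ge 2}\frac{x^\ell}{\ell!}\prod_{\gamma=1}^{\ell-1}(m-a\gamma+b\ell)$. $W_0$ is the principal branch of the Lambert $W$ function (the solution of $we^w=z$ analytic at $0$ with $W_0(0)=0$). Powers and logarithms of series with constant term $1$ are taken on the principal branch (i.e. $f^p=\exp(p\log f)$ with $\log 1=0$). *)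

theory Defs
  imports "HOL-Analysis.Analysis"
begin

definition master_coeff :: "complex \<Rightarrow> complex \<Rightarrow> complex \<Rightarrow> nat \<Rightarrow> complex" where
  "master_coeff m a b l =
     (if l = 0 then m
      else if l = 1 then 1
      else (\<Prod>g = 1..l - 1. m - a * of_nat g + b * of_nat l) / fact l)"

definition master_term :: "complex \<Rightarrow> complex \<Rightarrow> complex \<Rightarrow> complex \<Rightarrow> nat \<Rightarrow> complex" where
  "master_term m a b x l = master_coeff m a b l * x ^ l"

definition master :: "complex \<Rightarrow> complex \<Rightarrow> complex \<Rightarrow> complex \<Rightarrow> complex" where
  "master m a b x = (\<Sum>l. master_term m a b x l)"

end

theory Submission
  imports Defs "HOL-Computational_Algebra.Polynomial" "HOL-Complex_Analysis.Complex_Analysis"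
begin

definition pc :: "complex \<Rightarrow> complex \<Rightarrow> complex \<Rightarrow> nat \<Rightarrow> complex" where
  "pc a b m n = (if n = 0 then 1 else m * (\<Prod>g = 1..n - 1. m - a * of_nat g + b * of_nat n) / fact n)"

definition qc :: "complex \<Rightarrow> complex \<Rightarrow> complex \<Rightarrow> nat \<Rightarrow> complex" where
  "qc a b m n = (if n = 0 then 0 else (\<Prod>g = 1..n - 1. m - a * of_nat g + b * of_nat n) / fact n)"

lemma pc_qc: "pc a b m n = (if n = 0 then 1 else m * qc a b m n)"
  by (simp add: pc_def qc_def)

lemma master_coeff_1: "master_coeff 1 a b n = pc a b 1 n"
  by (simp add: master_coeff_def pc_def)

lemma master_coeff_0: "master_coeff 0 a b n = qc a b 0 n"
  by (simp add: master_coeff_def qc_def)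

lemma prod_shift1:
  "(\<Prod>g = 1..Suc k. f g) = f 1 * (\<Prod>g = 1..k. f (Suc g :: nat))"
proof -
  have "(\<Prod>g = 1..Suc k. f g) = f 1 * (\<Prod>g = Suc 1..Suc k. f g)"
    by (subst prod.atLeast_Suc_atMost) auto
  also have "(\<Prod>g = Suc 1..Suc k. f g) = (\<Prod>g = 1..k. f (Suc g))"
    by (rule prod.shift_bounds_cl_Suc_ivl)
  finally show ?thesis .
qed

lemma pc_shift2:
  "pc a b (m+a) (Suc (Suc k)) - pc a b m (Suc (Suc k)) = a * pc a b (m+b) (Suc k)"
proof -
  define s where "s = m + b * of_nat (Suc (Suc k))"
  define P where "P = (\<Prod>g = 1..k. s - a * of_nat g)"
  have e1: "(\<Prod>g = 1..Suc k. (m + a) - a * of_nat g + b * of_nat (Suc (Suc k))) = s * P"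
    unfolding P_def s_def by (subst prod_shift1) (simp add: algebra_simps)
  have e2: "(\<Prod>g = 1..Suc k. m - a * of_nat g + b * of_nat (Suc (Suc k))) = P * (s - a * of_nat (Suc k))"
    unfolding P_def s_def by (subst prod.cl_ivl_Suc) (simp add: algebra_simps)
  have e3: "(\<Prod>g = 1..k. (m + b) - a * of_nat g + b * of_nat (Suc k)) = P"
    unfolding P_def s_def by (intro prod.cong) (auto simp add: algebra_simps)
  have fn: "(fact (Suc (Suc k)) :: complex) = of_nat (Suc (Suc k)) * fact (Suc k)" by simp
  have "pc a b (m+a) (Suc (Suc k)) - pc a b m (Suc (Suc k)) = ((m+a) * (s*P) - m * (P * (s - a * of_nat (Suc k)))) / fact (Suc (Suc k))"
    unfolding pc_def using e1 e2 by (simp add: diff_divide_distrib)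
  also have "\<dots> = (of_nat (Suc (Suc k)) * (a*((m+b)*P))) / (of_nat (Suc (Suc k)) * fact (Suc k))"
    unfolding fn by (simp add: s_def algebra_simps del: fact_Suc)
  also have "\<dots> = a * ((m+b) * P / fact (Suc k))"
    by (simp del: fact_Suc of_nat_Suc)
  also have "\<dots> = a * pc a b (m+b) (Suc k)"
    unfolding pc_def using e3 by simp
  finally show ?thesis .
qed

lemma pc_shift:
  "pc a b (m+a) (Suc n) - pc a b m (Suc n) = a * pc a b (m+b) n"
proof (cases n)
  case 0 then show ?thesis by (simp add: pc_def)
next
  case (Suc k) then show ?thesis using pc_shift2 by simp
qed

lemma pc_0 [simp]: "pc a b m 0 = 1" by (simp add: pc_def)
lemma pc_zero_Suc [simp]: "pc a b 0 (Suc n) = 0" by (simp add: pc_def)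

lemma pc_aa: "pc a b a (Suc n) = a * pc a b b n"
  using pc_shift[of a b 0 n] by simp

lemma qc_a0: "qc 0 b 0 (Suc n) = pc 0 b b n"
proof (cases n)
  case 0 then show ?thesis by (simp add: pc_def qc_def)
next
  case (Suc k)
  have f: "(fact (Suc (Suc k)) :: complex) = of_nat (Suc (Suc k)) * fact (Suc k)" by simp
  have "qc 0 b 0 (Suc n) = (b * of_nat (Suc (Suc k))) ^ Suc k / fact (Suc (Suc k))"
    by (simp add: qc_def Suc del: fact_Suc of_nat_Suc)
  also have "\<dots> = b * (b * of_nat (Suc (Suc k))) ^ k / fact (Suc k)"
    unfolding f by (simp add: field_simps del: fact_Suc of_nat_Suc)
  also have "\<dots> = pc 0 b b n"
  proof -
    have "(\<Prod>g = 1..k. b - 0 * of_nat g + b * of_nat (Suc k)) = (b * of_nat (Suc (Suc k))) ^ k"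
      by (simp add: algebra_simps)
    then show ?thesis by (simp add: pc_def Suc del: fact_Suc of_nat_Suc)
  qed
  finally show ?thesis .
qed

definition cf :: "complex \<Rightarrow> complex \<Rightarrow> nat \<Rightarrow> complex \<Rightarrow> complex \<Rightarrow> complex" where
  "cf a b n m m' = (\<Sum>k\<le>n. pc a b m k * pc a b m' (n-k)) - pc a b (m+m') n"

lemma cf_rec: "cf a b (Suc n) (m+a) m' - cf a b (Suc n) m m' = a * cf a b n (m+b) m'"
proof -
  have "cf a b (Suc n) (m+a) m' - cf a b (Suc n) m m' =
     (\<Sum>k\<le>Suc n. (pc a b (m+a) k - pc a b m k) * pc a b m' (Suc n - k))
     - (pc a b ((m+m')+a) (Suc n) - pc a b (m+m') (Suc n))"
    unfolding cf_def by (simp add: sum_subtractf algebra_simps)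
  also have "\<dots> = (\<Sum>k\<le>n. a * pc a b (m+b) k * pc a b m' (n - k)) - a * pc a b ((m+m')+b) n"
    by (subst sum.atMost_Suc_shift) (simp add: pc_shift)
  also have "\<dots> = a * cf a b n (m+b) m'"
    unfolding cf_def by (simp add: sum_distrib_left algebra_simps)
  finally show ?thesis .
qed


lemma cf_0 [simp]: "cf a b 0 m m' = 0" by (simp add: cf_def)

lemma cf_m0: "cf a b (Suc n) 0 m' = 0"
  unfolding cf_def by (subst sum.atMost_Suc_shift) simp

definition pP :: "complex \<Rightarrow> complex \<Rightarrow> nat \<Rightarrow> complex poly" where
  "pP a b n = (if n = 0 then 1 else smult (inverse (fact n))
      ([:0,1:] * (\<Prod>g\<in>{1..n-1}. [:b * of_nat n - a * of_nat g, 1:])))"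

lemma poly_pP: "poly (pP a b n) m = pc a b m n"
  by (simp add: pP_def pc_def poly_prod algebra_simps divide_inverse)

lemma cf_poly: "\<exists>p. \<forall>m. poly p m = cf a b n m m'"
proof -
  define p where "p = (\<Sum>k\<le>n. pP a b k * [:pc a b m' (n-k):]) - pcompose (pP a b n) [:m', 1:]"
  have "poly p m = cf a b n m m'" for m
    unfolding p_def cf_def by (simp add: poly_sum poly_pP poly_pcompose algebra_simps)
  then show ?thesis by blast
qed

lemma cf_zero_nz:
  assumes "a \<noteq> 0"
  shows "cf a b n m m' = 0"
proof (induction n arbitrary: m)
  case 0 then show ?case by simp
next
  case (Suc n)
  have per: "cf a b (Suc n) (m+a) m' = cf a b (Suc n) m m'" for m
    using cf_rec[of a b n m m'] Suc by simp
  have roots: "cf a b (Suc n) (of_nat j * a) m' = 0" for j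
  proof (induction j)
    case 0 then show ?case using cf_m0 by simp
  next
    case (Suc j) then show ?case using per[of "of_nat j * a"] by (simp add: algebra_simps)
  qed
  obtain p where p: "\<And>m. poly p m = cf a b (Suc n) m m'" using cf_poly by blast
  have "p = 0"
  proof (rule ccontr)
    assume "p \<noteq> 0"
    then have fin: "finite {x. poly p x = 0}" by (rule poly_roots_finite)
    have "range (\<lambda>j::nat. of_nat j * a) \<subseteq> {x. poly p x = 0}" using roots p by auto
    moreover have "infinite (range (\<lambda>j::nat. of_nat j * a))"
      using assms by (intro range_inj_infinite) (auto simp: inj_on_def)
    ultimately show False using fin finite_subset by blast
  qed
  then show ?case using p[of m] by simp
qed

lemma isCont_pc [continuous_intros]: "isCont (\<lambda>a. pc a b m k) x"
  by (cases "k = 0") (auto simp: pc_def intro!: continuous_intros)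

lemma cf_zero: "cf a b n m m' = 0"
proof (cases "a = 0")
  case False then show ?thesis by (rule cf_zero_nz)
next
  case True
  have c: "isCont (\<lambda>a. cf a b n m m') 0"
    unfolding cf_def by (intro continuous_intros)
  have "((\<lambda>a. cf a b n m m') \<longlongrightarrow> cf 0 b n m m') (at 0)"
    using c by (simp add: isCont_def)
  moreover have "((\<lambda>a. cf a b n m m') \<longlongrightarrow> 0) (at 0)"
    by (rule tendsto_eventually) (auto simp: eventually_at intro!: exI[of _ 1] cf_zero_nz)
  ultimately have "cf 0 b n m m' = 0" using tendsto_unique by (metis at_neq_bot)
  then show ?thesis using True by simp
qed

lemma pc_conv: "(\<Sum>k\<le>n. pc a b m k * pc a b m' (n-k)) = pc a b (m+m') n"
  using cf_zero[of a b n m m'] by (simp add: cf_def)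


lemma pow_fact_le_exp: "(x::real) \<ge> 0 \<Longrightarrow> x ^ n / fact n \<le> exp x"
proof -
  assume x: "x \<ge> 0"
  have s: "(\<lambda>k. x ^ k /\<^sub>R fact k) sums exp x" by (rule exp_converges)
  have "sum (\<lambda>k. x ^ k /\<^sub>R fact k) {n} \<le> suminf (\<lambda>k. x ^ k /\<^sub>R fact k)"
    by (rule sum_le_suminf) (use s x in \<open>auto simp: sums_iff\<close>)
  then show ?thesis using s by (simp add: sums_iff divide_inverse mult.commute)
qed

lemma qc_bound:
  assumes m: "norm m \<le> R" and K: "norm a + norm b + R \<le> K" "1 \<le> K"
  shows "norm (qc a b m n) \<le> (exp 1 * K) ^ n"
proof (cases "n = 0")
  case True then show ?thesis by (simp add: qc_def)
next
  case False
  have R0: "0 \<le> R" using m norm_ge_zero order_trans by blast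
  have n1: "1 \<le> real n" using False by simp
  have "R * 1 \<le> R * real n" by (rule mult_left_mono[OF n1 R0])
  then have mR: "norm m \<le> R * real n" using m by simp
  have fac: "\<And>g. g \<in> {1..n-1} \<Longrightarrow> norm (m - a * of_nat g + b * of_nat n) \<le> K * real n"
  proof -
    fix g assume g: "g \<in> {1..n-1}"
    have gn: "real g \<le> real n" using g by auto
    have "norm (m - a * of_nat g + b * of_nat n) \<le> norm m + norm a * real g + norm b * real n"
      by (rule order_trans[OF norm_triangle_ineq]) (auto intro!: order_trans[OF norm_triangle_ineq4] simp: norm_mult)
    also have "\<dots> \<le> R * real n + norm a * real n + norm b * real n"
      using mR gn by (intro add_mono mult_left_mono) auto
    also have "\<dots> = (R + norm a + norm b) * real n" by (simp add: algebra_simps)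
    also have "\<dots> \<le> K * real n" using K by (intro mult_right_mono) auto
    finally show "norm (m - a * of_nat g + b * of_nat n) \<le> K * real n" .
  qed
  have "norm (\<Prod>g = 1..n - 1. m - a * of_nat g + b * of_nat n) \<le> (\<Prod>g = 1..n - 1. K * real n)"
    unfolding prod_norm[symmetric] by (rule prod_mono) (use fac in auto)
  also have "\<dots> = (K * real n) ^ (n - 1)" by simp
  also have "\<dots> \<le> (K * real n) ^ n"
    using False K n1 by (intro power_increasing) (auto intro: order_trans[OF _ mult_mono[of 1 K 1 "real n"]])
  finally have pb: "norm (\<Prod>g = 1..n - 1. m - a * of_nat g + b * of_nat n) \<le> K ^ n * real n ^ n"
    by (simp add: power_mult_distrib)
  have "norm (qc a b m n) = norm (\<Prod>g = 1..n - 1. m - a * of_nat g + b * of_nat n) / fact n"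
    using False by (simp add: qc_def norm_divide)
  also have "\<dots> \<le> K ^ n * (real n ^ n / fact n)"
    using pb by (simp add: divide_right_mono)
  also have "\<dots> \<le> K ^ n * exp (real n)"
    using K by (intro mult_left_mono pow_fact_le_exp) auto
  also have "\<dots> = (exp 1 * K) ^ n"
    by (simp add: power_mult_distrib exp_of_nat_mult[symmetric])
  finally show ?thesis .
qed

lemma pc_bound:
  assumes m: "norm m \<le> R" and K: "norm a + norm b + R \<le> K" "1 \<le> K"
  shows "norm (pc a b m n) \<le> (R + 1) * (exp 1 * K) ^ n"
proof (cases "n = 0")
  case True then show ?thesis using m norm_ge_zero[of m] by (simp del: norm_ge_zero)
next
  case False
  have "norm (pc a b m n) = norm m * norm (qc a b m n)" using False by (simp add: pc_qc norm_mult)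
  also have "\<dots> \<le> (R + 1) * (exp 1 * K) ^ n"
    using qc_bound[OF assms] m order_trans[OF norm_ge_zero m] by (intro mult_mono) auto
  finally show ?thesis .
qed


definition hh :: "complex \<Rightarrow> complex \<Rightarrow> complex \<Rightarrow> complex \<Rightarrow> complex" where
  "hh a b x m = (\<Sum>n. pc a b m n * x ^ n)"
definition SS :: "complex \<Rightarrow> complex \<Rightarrow> complex \<Rightarrow> complex \<Rightarrow> complex" where
  "SS a b x t = (\<Sum>n. qc a b t n * x ^ n)"
definition Rb :: "complex \<Rightarrow> complex \<Rightarrow> real" where "Rb a b = norm a + norm b + 2"
definition Kb :: "complex \<Rightarrow> complex \<Rightarrow> real" where "Kb a b = norm a + norm b + Rb a b + 1"
definition rb :: "complex \<Rightarrow> complex \<Rightarrow> real" where "rb a b = 1 / (2 * (exp 1 * Kb a b))"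

lemma Kb_ge: "1 \<le> Kb a b" "norm a + norm b + Rb a b \<le> Kb a b"
  by (auto simp: Kb_def Rb_def)
lemma rb_pos: "0 < rb a b" using Kb_ge(1)[of a b] by (auto simp: rb_def intro!: mult_pos_pos)
lemma Rb_pos: "1 < Rb a b"
proof -
  have "0 \<le> norm a + norm b" by simp
  then show ?thesis unfolding Rb_def by linarith
qed

lemma xpow_bound:
  assumes "norm x \<le> rb a b"
  shows "(exp 1 * Kb a b) ^ n * norm x ^ n \<le> (1/2) ^ n"
proof -
  have C: "0 < exp 1 * Kb a b" using Kb_ge(1)[of a b] by auto
  have "(exp 1 * Kb a b) ^ n * norm x ^ n = ((exp 1 * Kb a b) * norm x) ^ n" by (simp add: power_mult_distrib)
  also have "\<dots> \<le> ((exp 1 * Kb a b) * rb a b) ^ n"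
    using assms C by (intro power_mono mult_left_mono) auto
  also have "(exp 1 * Kb a b) * rb a b = 1/2" using C Kb_ge(1)[of a b] by (simp add: rb_def)
  finally show ?thesis .
qed

lemma pc_term_bound:
  assumes "norm m \<le> Rb a b" "norm x \<le> rb a b"
  shows "norm (pc a b m n * x ^ n) \<le> (Rb a b + 1) * (1/2) ^ n"
proof -
  have "norm (pc a b m n * x ^ n) = norm (pc a b m n) * norm x ^ n" by (simp add: norm_mult norm_power)
  also have "\<dots> \<le> ((Rb a b + 1) * (exp 1 * Kb a b) ^ n) * norm x ^ n"
    by (intro mult_right_mono pc_bound[OF assms(1) Kb_ge(2) Kb_ge(1)]) auto
  also have "\<dots> = (Rb a b + 1) * ((exp 1 * Kb a b) ^ n * norm x ^ n)" by simp
  also have "\<dots> \<le> (Rb a b + 1) * (1/2) ^ n"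
    using Rb_pos[of a b] by (intro mult_left_mono xpow_bound assms) auto
  finally show ?thesis .
qed

lemma qc_term_bound:
  assumes "norm m \<le> Rb a b" "norm x \<le> rb a b"
  shows "norm (qc a b m n * x ^ n) \<le> (1/2) ^ n"
proof -
  have "norm (qc a b m n * x ^ n) = norm (qc a b m n) * norm x ^ n" by (simp add: norm_mult norm_power)
  also have "\<dots> \<le> (exp 1 * Kb a b) ^ n * norm x ^ n"
    by (intro mult_right_mono qc_bound[OF assms(1) Kb_ge(2) Kb_ge(1)]) auto
  also have "\<dots> \<le> (1/2) ^ n" by (rule xpow_bound[OF assms(2)])
  finally show ?thesis .
qed

lemma summable_pc:
  assumes "norm m \<le> Rb a b" "norm x \<le> rb a b"
  shows "summable (\<lambda>n. norm (pc a b m n * x ^ n))"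
  by (rule summable_comparison_test[of _ "\<lambda>n. (Rb a b + 1) * (1/2) ^ n"])
     (use pc_term_bound[OF assms] in \<open>auto intro!: summable_mult summable_geometric\<close>)

lemma summable_qc:
  assumes "norm m \<le> Rb a b" "norm x \<le> rb a b"
  shows "summable (\<lambda>n. norm (qc a b m n * x ^ n))"
  by (rule summable_comparison_test[of _ "\<lambda>n. (1/2) ^ n"])
     (use qc_term_bound[OF assms] in \<open>auto intro!: summable_geometric\<close>)

lemma hh_mult:
  assumes "norm m \<le> Rb a b" "norm t \<le> Rb a b" "norm x \<le> rb a b"
  shows "hh a b x (m + t) = hh a b x m * hh a b x t"
proof -
  have "hh a b x m * hh a b x t = (\<Sum>k. \<Sum>i\<le>k. (pc a b m i * x ^ i) * (pc a b t (k - i) * x ^ (k - i)))"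
    unfolding hh_def by (rule Cauchy_product) (use summable_pc assms in auto)
  also have "\<dots> = (\<Sum>k. pc a b (m + t) k * x ^ k)"
  proof (rule suminf_cong)
    fix k
    have "(\<Sum>i\<le>k. (pc a b m i * x ^ i) * (pc a b t (k - i) * x ^ (k - i))) =
          (\<Sum>i\<le>k. pc a b m i * pc a b t (k - i) * x ^ k)"
    proof (rule sum.cong)
      fix i assume "i \<in> {..k}"
      then have "x ^ i * x ^ (k - i) = x ^ k" by (simp flip: power_add)
      then show "(pc a b m i * x ^ i) * (pc a b t (k - i) * x ^ (k - i)) = pc a b m i * pc a b t (k - i) * x ^ k"
        by (simp add: algebra_simps)
    qed simp
    also have "\<dots> = pc a b (m + t) k * x ^ k"
      by (simp add: pc_conv flip: sum_distrib_right)
    finally show "(\<Sum>i\<le>k. (pc a b m i * x ^ i) * (pc a b t (k - i) * x ^ (k - i))) = pc a b (m + t) k * x ^ k" .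
  qed
  finally show ?thesis by (simp add: hh_def)
qed

lemma hh_SS:
  assumes "norm t \<le> Rb a b" "norm x \<le> rb a b"
  shows "hh a b x t = 1 + t * SS a b x t"
proof -
  have s1: "(\<lambda>n. if n = 0 then 1 else 0) sums (1::complex)"
    using sums_single[of 0 "\<lambda>_. 1::complex"] by simp
  have s2: "(\<lambda>n. qc a b t n * x ^ n) sums SS a b x t"
    unfolding SS_def by (rule summable_sums, rule summable_norm_cancel, rule summable_qc[OF assms])
  have "(\<lambda>n. (if n = 0 then 1 else 0) + t * (qc a b t n * x ^ n)) sums (1 + t * SS a b x t)"
    by (intro sums_add sums_mult s1 s2)
  moreover have "(\<lambda>n. (if n = 0 then 1 else 0) + t * (qc a b t n * x ^ n)) = (\<lambda>n. pc a b t n * x ^ n)"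
    by (auto simp: pc_qc qc_def)
  ultimately show ?thesis unfolding hh_def by (simp add: sums_iff)
qed

lemma continuous_on_qc [continuous_intros]: "continuous_on A (\<lambda>t. qc a b t i)"
  by (cases "i = 0") (auto simp: qc_def intro!: continuous_intros)

lemma SS_cont:
  assumes "norm x \<le> rb a b"
  shows "continuous_on (cball 0 (Rb a b)) (SS a b x)"
proof -
  have ul: "uniform_limit (cball 0 (Rb a b)) (\<lambda>n t. \<Sum>i<n. qc a b t i * x ^ i) (\<lambda>t. suminf (\<lambda>i. qc a b t i * x ^ i)) sequentially"
    by (rule Weierstrass_m_test[where M = "\<lambda>n. (1/2) ^ n"]) (use qc_term_bound assms in \<open>auto intro!: summable_geometric\<close>)
  have "continuous_on (cball 0 (Rb a b)) (\<lambda>t. suminf (\<lambda>i. qc a b t i * x ^ i))"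
    by (rule uniform_limit_theorem[OF _ ul]) (auto intro!: always_eventually continuous_intros)
  then show ?thesis unfolding SS_def[abs_def] by simp
qed


lemma hh_deriv:
  assumes x: "norm x \<le> rb a b" and m: "norm m < Rb a b"
  shows "(hh a b x has_field_derivative hh a b x m * SS a b x 0) (at m)"
proof -
  define R where "R = Rb a b"
  have R: "0 < R" using Rb_pos[of a b] by (simp add: R_def)
  have "isCont (SS a b x) 0"
    using continuous_on_interior[OF SS_cont[OF x], of 0] R by (simp add: R_def)
  moreover have "((\<lambda>y. y - m) \<longlongrightarrow> m - m) (at m)"
    by (intro tendsto_intros)
  then have "((\<lambda>y. y - m) \<longlongrightarrow> 0) (at m)" by simp
  ultimately have "((\<lambda>y. SS a b x (y - m)) \<longlongrightarrow> SS a b x 0) (at m)"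
    by (rule isCont_tendsto_compose)
  then have lim: "((\<lambda>y. hh a b x m * SS a b x (y - m)) \<longlongrightarrow> hh a b x m * SS a b x 0) (at m)"
    by (rule tendsto_mult_left)
  have ev: "eventually (\<lambda>y. hh a b x m * SS a b x (y - m) = (hh a b x y - hh a b x m) / (y - m)) (at m)"
    unfolding eventually_at
  proof (intro exI[of _ "R - norm m"] conjI ballI impI)
    show "0 < R - norm m" using m by (simp add: R_def)
    fix y assume y: "y \<noteq> m \<and> dist y m < R - norm m"
    have d: "norm (y - m) < R - norm m" using y by (simp add: dist_norm)
    have ny: "norm y \<le> R"
      using norm_triangle_ineq[of m "y - m"] d by simp
    have nd: "norm (y - m) \<le> R" using d norm_ge_zero[of m] by linarith
    have "hh a b x y = hh a b x (m + (y - m))" by simp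
    also have "\<dots> = hh a b x m * hh a b x (y - m)"
      using m nd x by (intro hh_mult) (auto simp: R_def)
    also have "\<dots> = hh a b x m * (1 + (y - m) * SS a b x (y - m))"
      using nd x by (simp add: hh_SS R_def)
    finally have "hh a b x y - hh a b x m = (hh a b x m * SS a b x (y - m)) * (y - m)"
      by (simp add: algebra_simps)
    then show "hh a b x m * SS a b x (y - m) = (hh a b x y - hh a b x m) / (y - m)"
      using y by (simp add: eq_divide_eq)
  qed
  show ?thesis
    unfolding has_field_derivative_iff by (rule Lim_transform_eventually[OF lim ev])
qed

lemma hh_exp:
  assumes x: "norm x \<le> rb a b" and m: "norm m < Rb a b"
  shows "hh a b x m = exp (m * SS a b x 0)"
proof -
  define S0 where "S0 = SS a b x 0"
  define g where "g y = hh a b x y * exp (- (y * S0))" for y :: complex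
  have "\<exists>c. \<forall>y\<in>ball 0 (Rb a b). g y = c"
  proof (rule has_field_derivative_zero_constant)
    fix y :: complex assume y: "y \<in> ball 0 (Rb a b)"
    have e: "((\<lambda>y. exp (- (y * S0))) has_field_derivative exp (- (y * S0)) * (- S0)) (at y)"
    proof -
      have e0: "((\<lambda>y. - (y * S0)) has_field_derivative - (1 * S0)) (at y)"
        by (intro DERIV_minus DERIV_cmult_right DERIV_ident)
      show ?thesis using DERIV_chain2[OF DERIV_exp e0] by simp
    qed
    have h: "(hh a b x has_field_derivative hh a b x y * S0) (at y)"
      unfolding S0_def using y by (intro hh_deriv[OF x]) auto
    have "(g has_field_derivative (hh a b x y * S0 * exp (- (y * S0)) + exp (- (y * S0)) * (- S0) * hh a b x y)) (at y)"
      unfolding g_def by (rule DERIV_mult[OF h e])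
    moreover have "hh a b x y * S0 * exp (- (y * S0)) + exp (- (y * S0)) * (- S0) * hh a b x y = 0"
      by (simp add: algebra_simps)
    ultimately have "(g has_field_derivative 0) (at y)" by simp
    then show "(g has_field_derivative 0) (at y within ball 0 (Rb a b))"
      by (rule has_field_derivative_at_within)
  qed auto
  then obtain c where c: "\<And>y. y \<in> ball 0 (Rb a b) \<Longrightarrow> g y = c" by metis
  have "g 0 = 1" using hh_SS[of 0 a b x] x Rb_pos[of a b] by (simp add: g_def)
  then have "g m = 1" using c[of m] c[of 0] m Rb_pos[of a b] by simp
  then have "hh a b x m * exp (- (m * S0)) * exp (m * S0) = exp (m * S0)" by (simp add: g_def)
  then show ?thesis by (simp add: S0_def mult.assoc flip: exp_add)
qed


lemma norm_lt_Rb: "norm a < Rb a b" "norm b < Rb a b" "norm (1::complex) < Rb a b"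
proof -
  have "0 \<le> norm a" "0 \<le> norm b" "norm (1::complex) = 1" by simp_all
  then show "norm a < Rb a b" "norm b < Rb a b" "norm (1::complex) < Rb a b"
    unfolding Rb_def by linarith+
qed

lemma hh_ab:
  assumes x: "norm x \<le> rb a b"
  shows "hh a b x a = 1 + a * x * hh a b x b"
proof -
  have "(\<lambda>n. pc a b b n * x ^ n) sums hh a b x b"
    unfolding hh_def
    by (rule summable_sums, rule summable_norm_cancel, rule summable_pc[OF less_imp_le[OF norm_lt_Rb(2)] x])
  then have "(\<lambda>n. a * x * (pc a b b n * x ^ n)) sums (a * x * hh a b x b)"
    by (rule sums_mult)
  moreover have "(\<lambda>n. a * x * (pc a b b n * x ^ n)) = (\<lambda>n. pc a b a (Suc n) * x ^ Suc n)"
    by (auto simp: pc_aa algebra_simps)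
  ultimately have "(\<lambda>n. pc a b a (Suc n) * x ^ Suc n) sums (a * x * hh a b x b)" by simp
  then have "(\<lambda>n. pc a b a n * x ^ n) sums (a * x * hh a b x b + pc a b a 0 * x ^ 0)"
    by (rule sums_Suc[where f = "\<lambda>n. pc a b a n * x ^ n"])
  then show ?thesis unfolding hh_def by (simp add: sums_iff)
qed

lemma SS_a0:
  assumes x: "norm x \<le> rb 0 b"
  shows "SS 0 b x 0 = x * hh 0 b x b"
proof -
  have "(\<lambda>n. pc 0 b b n * x ^ n) sums hh 0 b x b"
    unfolding hh_def
    by (rule summable_sums, rule summable_norm_cancel, rule summable_pc[OF less_imp_le[OF norm_lt_Rb(2)] x])
  then have "(\<lambda>n. x * (pc 0 b b n * x ^ n)) sums (x * hh 0 b x b)"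
    by (rule sums_mult)
  moreover have "(\<lambda>n. x * (pc 0 b b n * x ^ n)) = (\<lambda>n. qc 0 b 0 (Suc n) * x ^ Suc n)"
    by (auto simp: qc_a0 algebra_simps)
  ultimately have "(\<lambda>n. qc 0 b 0 (Suc n) * x ^ Suc n) sums (x * hh 0 b x b)" by simp
  then have "(\<lambda>n. qc 0 b 0 n * x ^ n) sums (x * hh 0 b x b + qc 0 b 0 0 * x ^ 0)"
    by (rule sums_Suc[where f = "\<lambda>n. qc 0 b 0 n * x ^ n"])
  then show ?thesis unfolding SS_def by (simp add: sums_iff qc_def)
qed

lemma SS_bound:
  assumes x: "norm x \<le> rb a b"
  shows "norm (SS a b x 0) \<le> 4 * (exp 1 * Kb a b) * norm x"
proof -
  define C where "C = exp 1 * Kb a b"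
  have C: "0 < C" using Kb_ge(1)[of a b] by (simp add: C_def)
  have R0: "norm (0::complex) \<le> Rb a b" using Rb_pos[of a b] by simp
  have tb: "norm (qc a b 0 n * x ^ n) \<le> 2 * C * norm x * (1/2) ^ n" for n
  proof (cases n)
    case 0 then show ?thesis using C by (simp add: qc_def)
  next
    case (Suc k)
    have "norm (qc a b 0 n * x ^ n) \<le> C ^ n * norm x ^ n"
      unfolding C_def norm_mult norm_power
      by (intro mult_right_mono qc_bound[OF R0 Kb_ge(2) Kb_ge(1)]) simp
    also have "\<dots> = C * norm x * (C ^ k * norm x ^ k)" by (simp add: Suc)
    also have "\<dots> \<le> C * norm x * (1/2) ^ k"
      unfolding C_def by (intro mult_left_mono xpow_bound[OF x]) (use C in \<open>auto simp: C_def\<close>)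
    also have "\<dots> = 2 * C * norm x * (1/2) ^ n" by (simp add: Suc)
    finally show ?thesis .
  qed
  have sn: "summable (\<lambda>n. norm (qc a b 0 n * x ^ n))"
    by (rule summable_qc[OF R0 x])
  have "norm (SS a b x 0) \<le> (\<Sum>n. norm (qc a b 0 n * x ^ n))"
    unfolding SS_def by (rule summable_norm[OF sn])
  also have "\<dots> \<le> (\<Sum>n. 2 * C * norm x * (1/2) ^ n)"
    by (rule suminf_le[OF tb sn]) (intro summable_mult summable_geometric, simp)
  also have "\<dots> = 2 * C * norm x * 2"
    by (subst suminf_mult) (auto simp: suminf_geometric intro: summable_geometric)
  finally show ?thesis by (simp add: C_def)
qed

lemma key:
  assumes x: "norm x \<le> rb a b"
  shows "hh a b x 1 = exp (SS a b x 0)"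
    and "exp (a * SS a b x 0) = 1 + a * x * exp (b * SS a b x 0)"
proof -
  show "hh a b x 1 = exp (SS a b x 0)" using hh_exp[OF x norm_lt_Rb(3)] by simp
  have "exp (a * SS a b x 0) = hh a b x a" using hh_exp[OF x norm_lt_Rb(1)] by simp
  also have "\<dots> = 1 + a * x * hh a b x b" by (rule hh_ab[OF x])
  also have "hh a b x b = exp (b * SS a b x 0)" by (rule hh_exp[OF x norm_lt_Rb(2)])
  finally show "exp (a * SS a b x 0) = 1 + a * x * exp (b * SS a b x 0)" .
qed


lemma small:
  assumes e: "e > 0"
  shows "\<exists>d>0. \<forall>x. norm x < d \<longrightarrow> norm x \<le> rb a b \<and> norm (SS a b x 0) < e \<and>
            norm (a * SS a b x 0) < e \<and> norm (b * SS a b x 0) < e"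
proof -
  define C where "C = 4 * (exp 1 * Kb a b)"
  define N where "N = 1 + norm a + norm b"
  have C: "C > 0" using Kb_ge(1)[of a b] by (simp add: C_def)
  have N: "N \<ge> 1" "norm a \<le> N" "norm b \<le> N"
    using norm_ge_zero[of a] norm_ge_zero[of b] by (simp_all add: N_def)
  define d where "d = min (rb a b) (e / (C * N))"
  have d: "d > 0" using rb_pos[of a b] e C N by (simp add: d_def)
  show ?thesis
  proof (intro exI[of _ d] conjI allI impI d)
    fix x :: complex assume x: "norm x < d"
    then show xr: "norm x \<le> rb a b" by (simp add: d_def)
    have xe: "norm x < e / (C * N)" using x by (simp add: d_def)
    define L where "L = SS a b x 0"
    have "norm L \<le> C * norm x" using SS_bound[OF xr] by (simp add: C_def L_def)
    also have "\<dots> < C * (e / (C * N))" using xe C by (rule mult_strict_left_mono)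
    also have "\<dots> = e / N" using C by simp
    finally have L: "norm L < e / N" .
    have NL: "N * norm L < e" using L N by (simp add: field_simps)
    have "norm L \<le> N * norm L" using N by (simp add: mult_le_cancel_right1)
    then show "norm (SS a b x 0) < e" using NL by (simp add: L_def)
    have "norm a * norm L \<le> N * norm L" using N by (intro mult_right_mono) auto
    then show "norm (a * SS a b x 0) < e" using NL by (simp add: L_def norm_mult)
    have "norm b * norm L \<le> N * norm L" using N by (intro mult_right_mono) auto
    then show "norm (b * SS a b x 0) < e" using NL by (simp add: L_def norm_mult)
  qed
qed

lemma Ln_exp_small: "norm z < 1 \<Longrightarrow> Ln (exp z) = z"
  using abs_Im_le_cmod[of z] pi_gt3 by (intro Ln_exp) auto

lemma master_1: "master 1 a b x = hh a b x 1"
  by (simp add: master_def master_term_def hh_def master_coeff_1)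
lemma master_0: "master 0 a b x = SS a b x 0"
  by (simp add: master_def master_term_def SS_def master_coeff_0)
lemma summable_master_1: "norm x \<le> rb a b \<Longrightarrow> summable (master_term 1 a b x)"
  unfolding master_term_def master_coeff_1
  by (rule summable_norm_cancel, rule summable_pc[OF less_imp_le[OF norm_lt_Rb(3)]])
lemma summable_master_0: "norm x \<le> rb a b \<Longrightarrow> summable (master_term 0 a b x)"
  unfolding master_term_def master_coeff_0
  by (rule summable_norm_cancel, rule summable_qc) (use Rb_pos[of a b] in auto)


lemma SS_0b:
  assumes x: "norm x \<le> rb 0 b"
  shows "SS 0 b x 0 = x * exp (b * SS 0 b x 0)"
  using SS_a0[OF x] hh_exp[OF x norm_lt_Rb(2)] by simp

lemma small1:
  obtains d where "d > 0" "\<And>x. norm x < d \<Longrightarrow> norm x \<le> rb a b \<and> norm (SS a b x 0) < 1 \<and>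
            norm (a * SS a b x 0) < 1 \<and> norm (b * SS a b x 0) < 1"
  using small[of 1 a b] by auto

lemma ev_nhds0I:
  assumes "d > 0" "\<And>x::complex. norm x < d \<Longrightarrow> P x"
  shows "\<forall>\<^sub>F x in nhds 0. P x"
  unfolding eventually_nhds_metric using assms by (auto simp: dist_norm)

lemma part_iv:
  assumes a: "a \<noteq> 0"
  shows "\<forall>\<^sub>F x in nhds 0. summable (master_term 0 a b x) \<and>
           master 0 a b x = Ln (1 + a * x * exp (b * master 0 a b x)) / a"
proof -
  obtain d where d: "d > 0" "\<And>x. norm x < d \<Longrightarrow> norm x \<le> rb a b \<and> norm (SS a b x 0) < 1 \<and>
            norm (a * SS a b x 0) < 1 \<and> norm (b * SS a b x 0) < 1" using small1 by blast
  show ?thesis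
  proof (rule ev_nhds0I[OF d(1)])
    fix x :: complex assume "norm x < d"
    then have x: "norm x \<le> rb a b" and s: "norm (a * SS a b x 0) < 1" using d(2) by auto
    have "Ln (1 + a * x * exp (b * SS a b x 0)) = Ln (exp (a * SS a b x 0))" using key(2)[OF x] by simp
    also have "\<dots> = a * SS a b x 0" using s by (rule Ln_exp_small)
    finally show "summable (master_term 0 a b x) \<and> master 0 a b x = Ln (1 + a * x * exp (b * master 0 a b x)) / a"
      using a summable_master_0[OF x] by (simp add: master_0)
  qed
qed

lemma part_i:
  assumes a: "a \<noteq> 0"
  shows "(\<forall>\<^sub>F x in nhds 0. summable (master_term 1 a 0 x) \<and>
           master 1 a 0 x = (1 + a * x) powr (1 / a)) \<and>
       (\<forall>\<^sub>F x in nhds 0. summable (master_term 0 a 0 x) \<and>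
           master 0 a 0 x = Ln (1 + a * x) / a)"
proof -
  obtain d where d: "d > 0" "\<And>x. norm x < d \<Longrightarrow> norm x \<le> rb a 0 \<and> norm (SS a 0 x 0) < 1 \<and>
            norm (a * SS a 0 x 0) < 1 \<and> norm (0 * SS a 0 x 0) < 1" using small1 by blast
  have main: "summable (master_term 1 a 0 x) \<and> master 1 a 0 x = (1 + a * x) powr (1 / a) \<and>
              summable (master_term 0 a 0 x) \<and> master 0 a 0 x = Ln (1 + a * x) / a" if "norm x < d" for x
  proof -
    have x: "norm x \<le> rb a 0" and s: "norm (a * SS a 0 x 0) < 1" using d(2) that by auto
    have e: "1 + a * x = exp (a * SS a 0 x 0)" using key(2)[OF x] by simp
    have l: "Ln (1 + a * x) = a * SS a 0 x 0" unfolding e using s by (rule Ln_exp_small)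
    have "(1 + a * x) powr (1 / a) = exp (SS a 0 x 0)"
      unfolding powr_def using e l a by simp
    then show ?thesis using l a summable_master_0[OF x] summable_master_1[OF x] key(1)[OF x]
      by (simp add: master_0 master_1)
  qed
  show ?thesis by (intro conjI; rule ev_nhds0I[OF d(1)]) (use main in auto)
qed

lemma part_ii:
  shows "(\<forall>\<^sub>F x in nhds 0. summable (master_term 1 0 0 x) \<and> master 1 0 0 x = exp x) \<and>
         (\<forall>\<^sub>F x in nhds 0. summable (master_term 0 0 0 x) \<and> master 0 0 0 x = x)"
proof -
  have main: "summable (master_term 1 0 0 x) \<and> master 1 0 0 x = exp x \<and>
              summable (master_term 0 0 0 x) \<and> master 0 0 0 x = x" if x: "norm x < rb 0 0" for x
  proof -
    have x: "norm x \<le> rb 0 0" using x by simp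
    have "SS 0 0 x 0 = x" using SS_0b[OF x] by simp
    then show ?thesis using summable_master_0[OF x] summable_master_1[OF x] key(1)[OF x]
      by (simp add: master_0 master_1)
  qed
  show ?thesis by (intro conjI; rule ev_nhds0I[OF rb_pos]) (use main in auto)
qed

lemma part_iii:
  shows "(\<forall>\<^sub>F x in nhds 0. summable (master_term 1 0 b x) \<and>
           master 1 0 b x = exp (x * (master 1 0 b x) powr b)) \<and>
       (\<forall>\<^sub>F x in nhds 0. summable (master_term 0 0 b x) \<and>
           master 0 0 b x = x * exp (b * master 0 0 b x))"
proof -
  obtain d where d: "d > 0" "\<And>x. norm x < d \<Longrightarrow> norm x \<le> rb 0 b \<and> norm (SS 0 b x 0) < 1 \<and>
            norm (0 * SS 0 b x 0) < 1 \<and> norm (b * SS 0 b x 0) < 1" using small1 by blast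
  have main: "summable (master_term 1 0 b x) \<and> master 1 0 b x = exp (x * (master 1 0 b x) powr b) \<and>
              summable (master_term 0 0 b x) \<and> master 0 0 b x = x * exp (b * master 0 0 b x)" if "norm x < d" for x
  proof -
    have x: "norm x \<le> rb 0 b" and s: "norm (SS 0 b x 0) < 1" using d(2) that by auto
    define L where "L = SS 0 b x 0"
    have eq: "L = x * exp (b * L)" unfolding L_def by (rule SS_0b[OF x])
    have m1: "master 1 0 b x = exp L" using key(1)[OF x] by (simp add: master_1 L_def)
    have "exp L powr b = exp (b * L)"
      unfolding powr_def using Ln_exp_small[of L] s by (simp add: L_def)
    then have "exp (x * (master 1 0 b x) powr b) = exp L" using eq m1 by simp
    then show ?thesis using m1 eq summable_master_0[OF x] summable_master_1[OF x]
      by (simp add: master_0 L_def)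
  qed
  show ?thesis by (intro conjI; rule ev_nhds0I[OF d(1)]) (use main in auto)
qed


lemma W_part:
  fixes W :: "complex \<Rightarrow> complex"
  assumes b: "b \<noteq> 0" and W: "W analytic_on {0}" "W 0 = 0" "\<forall>\<^sub>F z in nhds 0. W z * exp (W z) = z"
  shows "\<forall>\<^sub>F x in nhds 0. summable (master_term 0 0 b x) \<and> master 0 0 b x = W (- b * x) / (- b)"
proof -
  define f where "f w = w * exp w" for w :: complex
  have hol: "f holomorphic_on UNIV" unfolding f_def by (intro holomorphic_intros)
  have "(f has_field_derivative (1 * exp 0 + exp 0 * 0)) (at 0)"
    unfolding f_def by (rule DERIV_mult[OF DERIV_ident DERIV_exp])
  then have "deriv f 0 = 1" by (simp add: DERIV_imp_deriv)
  then obtain r0 where r0: "r0 > 0" "inj_on f (ball 0 r0)"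
    using has_complex_derivative_locally_injective[OF hol, of 0] by auto
  have cW: "continuous (at 0) W"
    using analytic_on_imp_differentiable_at[OF W(1)] field_differentiable_imp_continuous_at by auto
  obtain d1 where d1: "d1 > 0" "\<And>z. norm z < d1 \<Longrightarrow> norm (W z) < r0"
    using cW r0(1) W(2) unfolding continuous_at_eps_delta by (force simp: dist_norm)
  obtain d2 where d2: "d2 > 0" "\<And>z. norm z < d2 \<Longrightarrow> W z * exp (W z) = z"
    using W(3) unfolding eventually_nhds_metric by (force simp: dist_norm)
  obtain d3 where d3: "d3 > 0" "\<And>x. norm x < d3 \<Longrightarrow> norm x \<le> rb 0 b \<and> norm (SS 0 b x 0) < min 1 r0 \<and>
            norm (0 * SS 0 b x 0) < min 1 r0 \<and> norm (b * SS 0 b x 0) < min 1 r0"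
    using small[of "min 1 r0" 0 b] r0(1) by auto
  define d where "d = min d3 (min d1 d2 / (norm b + 1))"
  have bp: "0 < norm b + 1" using norm_ge_zero[of b] by linarith
  have d: "d > 0" using d1(1) d2(1) d3(1) bp by (simp add: d_def)
  show ?thesis
  proof (rule ev_nhds0I[OF d])
    fix x :: complex assume xd: "norm x < d"
    then have x: "norm x \<le> rb 0 b" and s: "norm (b * SS 0 b x 0) < r0" using d3(2)[of x] by (auto simp: d_def)
    have "norm x < min d1 d2 / (norm b + 1)" using xd by (simp add: d_def)
    then have "(norm b + 1) * norm x < min d1 d2"
      by (simp add: field_simps add_pos_nonneg)
    moreover have "norm (- b * x) \<le> (norm b + 1) * norm x"
      by (simp add: norm_mult mult_right_mono)
    ultimately have z: "norm (- b * x) < d1" "norm (- b * x) < d2" by auto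
    define L where "L = SS 0 b x 0"
    have eq: "L = x * exp (b * L)" unfolding L_def by (rule SS_0b[OF x])
    have "f (- b * L) = - b * (L * exp (- (b * L)))" by (simp add: f_def)
    also have "L * exp (- (b * L)) = x" by (subst eq) (simp add: exp_minus)
    finally have fV: "f (- b * L) = - b * x" .
    have fW: "f (W (- b * x)) = - b * x" using d2(2)[OF z(2)] by (simp add: f_def)
    have "- b * L = W (- b * x)"
    proof (rule inj_onD[OF r0(2)])
      show "f (- b * L) = f (W (- b * x))" using fV fW by simp
      show "- b * L \<in> ball 0 r0" using s by (simp add: L_def norm_mult)
      show "W (- b * x) \<in> ball 0 r0" using d1(2)[OF z(1)] by simp
    qed
    then have "W (- b * x) / (- b) = (- b * L) / (- b)" by simp
    then have "L = W (- b * x) / (- b)" using b by (simp del: mult_minus_left minus_mult_left)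
    then have "master 0 0 b x = W (- b * x) / (- b)" by (simp add: master_0 L_def)
    then show "summable (master_term 0 0 b x) \<and> master 0 0 b x = W (- b * x) / (- b)"
      using summable_master_0[OF x] by simp
  qed
qed


lemma W_part2:
  fixes W :: "complex \<Rightarrow> complex"
  assumes b: "b \<noteq> 0"
  shows "W analytic_on {0} \<and> W 0 = 0 \<and> (\<forall>\<^sub>F z in nhds 0. W z * exp (W z) = z) \<longrightarrow>
          (\<forall>\<^sub>F x in nhds 0. master 0 0 b x = W (- b * x) / (- b))"
proof
  assume W: "W analytic_on {0} \<and> W 0 = 0 \<and> (\<forall>\<^sub>F z in nhds 0. W z * exp (W z) = z)"
  show "\<forall>\<^sub>F x in nhds 0. master 0 0 b x = W (- b * x) / (- b)"
    using W_part[OF b, of W] W by (auto elim: eventually_mono)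
qed

lemma W_part3:
  fixes W :: "complex \<Rightarrow> complex"
  shows "W analytic_on {0} \<and> W 0 = 0 \<and> (\<forall>\<^sub>F z in nhds 0. W z * exp (W z) = z) \<longrightarrow>
          (\<forall>\<^sub>F x in nhds 0. summable (master_term 0 0 (-1) x) \<and> master 0 0 (-1) x = W x)"
proof
  assume W: "W analytic_on {0} \<and> W 0 = 0 \<and> (\<forall>\<^sub>F z in nhds 0. W z * exp (W z) = z)"
  have "\<forall>\<^sub>F x in nhds 0. summable (master_term 0 0 (-1) x) \<and> master 0 0 (-1) x = W (- (-1) * x) / (- (-1))"
    using W_part[of "-1" W] W by auto
  then show "\<forall>\<^sub>F x in nhds 0. summable (master_term 0 0 (-1) x) \<and> master 0 0 (-1) x = W x"
    by simp
qed

theorem mainTheorem8: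
  fixes a b :: complex
  shows
   "(a \<noteq> 0 \<longrightarrow>
       (\<forall>\<^sub>F x in nhds 0. summable (master_term 1 a 0 x) \<and>
           master 1 a 0 x = (1 + a * x) powr (1 / a)) \<and>
       (\<forall>\<^sub>F x in nhds 0. summable (master_term 0 a 0 x) \<and>
           master 0 a 0 x = Ln (1 + a * x) / a))
    \<and> (\<forall>\<^sub>F x in nhds 0. summable (master_term 1 0 0 x) \<and> master 1 0 0 x = exp x)
    \<and> (\<forall>\<^sub>F x in nhds 0. summable (master_term 0 0 0 x) \<and> master 0 0 0 x = x)
    \<and> (b \<noteq> 0 \<longrightarrow>
       (\<forall>\<^sub>F x in nhds 0. summable (master_term 1 0 b x) \<and>
           master 1 0 b x = exp (x * (master 1 0 b x) powr b)) \<and>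
       (\<forall>\<^sub>F x in nhds 0. summable (master_term 0 0 b x) \<and>
           master 0 0 b x = x * exp (b * master 0 0 b x)) \<and>
       (\<forall>W :: complex \<Rightarrow> complex.
          W analytic_on {0} \<and> W 0 = 0 \<and> (\<forall>\<^sub>F z in nhds 0. W z * exp (W z) = z) \<longrightarrow>
          (\<forall>\<^sub>F x in nhds 0. master 0 0 b x = W (- b * x) / (- b))))
    \<and> (\<forall>W :: complex \<Rightarrow> complex.
          W analytic_on {0} \<and> W 0 = 0 \<and> (\<forall>\<^sub>F z in nhds 0. W z * exp (W z) = z) \<longrightarrow>
          (\<forall>\<^sub>F x in nhds 0. summable (master_term 0 0 (-1) x) \<and> master 0 0 (-1) x = W x))
    \<and> (a \<noteq> 0 \<longrightarrow>
       (\<forall>\<^sub>F x in nhds 0. summable (master_term 0 a b x) \<and>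
           master 0 a b x = Ln (1 + a * x * exp (b * master 0 a b x)) / a))"
  using part_i[of a] part_ii part_iii[of b] W_part2[of b] W_part3 part_iv[of a b] by blast


end
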